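(* Let $\lambda=(\lambda_0,\lambda_1,\dots)\in\mathbf{W}(\mathcal{O}_K)$ and let $(\phi_0,\phi_1,\dots)\in\mathcal{O}_K^{\mathbb{N}}$ be its phantom vector. Then $\phi_j\to0$ in $\mathcal{O}_K$ if and only if $|\lambda_j|<1$ for all $j\ge0$.
   Context: $K$ is a field of characteristic $0$, complete for a non-archimedean absolute value $|\cdot|$, residue field of characteristic $p>0$; $\mathcal{O}_K=\{|x|\le1\}$. $\mathbf{W}(\mathcal{O}_K)$ is the ring of $p$-typical Witt vectors (of infinite length) with entries in $\mathcal{O}_K$; the phantom vector of $\lambda$ is given by $\phi_m=\lambda_0^{p^m}+p\lambda_1^{p^{m-1}}+\cdots+p^m\lambda_m$. *)

theory Defs
  imports "HOL-Analysis.Analysis"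
begin

definition nonarch_abs :: "('a::field \<Rightarrow> real) \<Rightarrow> bool" where
  "nonarch_abs av \<longleftrightarrow>
     (\<forall>x. av x \<ge> 0) \<and> (\<forall>x. av x = 0 \<longleftrightarrow> x = 0) \<and>
     (\<forall>x y. av (x * y) = av x * av y) \<and>
     (\<forall>x y. av (x + y) \<le> max (av x) (av y))"

definition abs_complete :: "('a::field \<Rightarrow> real) \<Rightarrow> bool" where
  "abs_complete av \<longleftrightarrow>
     (\<forall>s :: nat \<Rightarrow> 'a.
        (\<forall>e>0. \<exists>N. \<forall>m\<ge>N. \<forall>n\<ge>N. av (s m - s n) < e) \<longrightarrow>
        (\<exists>L. (\<lambda>n. av (s n - L)) \<longlonglongrightarrow> 0))"

text \<open>Residue field of characteristic p (p prime): |p| < 1.\<close>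
definition residue_char :: "('a::field \<Rightarrow> real) \<Rightarrow> nat \<Rightarrow> bool" where
  "residue_char av p \<longleftrightarrow> prime p \<and> av (of_nat p) < 1"

text \<open>Witt vectors with entries in O_K: sequences with all entries of absolute value at most 1.\<close>
definition witt_OK :: "('a::field \<Rightarrow> real) \<Rightarrow> (nat \<Rightarrow> 'a) \<Rightarrow> bool" where
  "witt_OK av lam \<longleftrightarrow> (\<forall>j. av (lam j) \<le> 1)"

definition phantom :: "nat \<Rightarrow> (nat \<Rightarrow> 'a::field) \<Rightarrow> nat \<Rightarrow> 'a" where
  "phantom p lam m = (\<Sum>i\<le>m. of_nat p ^ i * lam i ^ (p ^ (m - i)))"

end

theory Submission
  imports Defs
begin

lemma na_basic:
  assumes "nonarch_abs av"
  shows "av (0::'a::field) = 0" "av 1 = 1" "av (- x) = av x" "av (x ^ n) = av x ^ n"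
    "av (x * y) = av x * av y" "av (x + y) \<le> max (av x) (av y)" "av x \<ge> 0"
proof -
  have m: "\<And>x y. av (x * y) = av x * av y" and nn: "\<And>x. av x \<ge> 0"
    and z: "\<And>x. av x = 0 \<longleftrightarrow> x = 0" and t: "\<And>x y. av (x + y) \<le> max (av x) (av y)"
    using assms unfolding nonarch_abs_def by auto
  show "av (0::'a) = 0" using z by simp
  have "av 1 = av 1 * av (1::'a)" using m[of 1 1] by simp
  moreover have "av (1::'a) \<noteq> 0" using z by simp
  ultimately show a1: "av 1 = 1" by (metis mult_cancel_right1)
  have "av (-1) * av (-1::'a) = 1" using m[of "-1" "-1"] a1 by simp
  hence "av (-1::'a) = 1" using nn[of "-1"]
    by (metis abs_of_nonneg abs_square_eq_1 power2_eq_square)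
  thus "av (- x) = av x" using m[of "-1" x] by simp
  show "av (x ^ n) = av x ^ n" by (induction n) (simp_all add: a1 m)
  show "av (x * y) = av x * av y" by (rule m)
  show "av (x + y) \<le> max (av x) (av y)" by (rule t)
  show "av x \<ge> 0" by (rule nn)
qed

lemma na_sum_less:
  assumes "nonarch_abs av" "finite S" "e > 0" "\<And>i. i \<in> S \<Longrightarrow> av (f i :: 'a::field) < e"
  shows "av (sum f S) < e"
  using assms(2,4)
proof (induction S rule: finite_induct)
  case empty then show ?case using na_basic[OF assms(1)] assms(3) by simp
next
  case (insert x F)
  have "av (f x) < e" using insert.prems by simp
  moreover have "av (sum f F) < e" using insert by simp
  moreover have "av (f x + sum f F) \<le> max (av (f x)) (av (sum f F))"
    using na_basic(6)[OF assms(1)] .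
  ultimately show ?case using insert(1,2) by (simp add: max_def split: if_splits)
qed

lemma na_strict:
  assumes "nonarch_abs av" "av a < av (b::'a::field)"
  shows "av (b + a) = av b"
proof -
  have "av (b + a) \<le> av b" using na_basic(6)[OF assms(1), of b a] assms(2) by simp
  moreover have "av b \<le> max (av (b + a)) (av (- a))"
    using na_basic(6)[OF assms(1), of "b + a" "- a"] by simp
  ultimately show ?thesis using assms(2) na_basic(3)[OF assms(1), of a] by auto
qed

lemma pow_ge: "(p::nat) \<ge> 2 \<Longrightarrow> k \<le> p ^ k"
proof -
  assume "p \<ge> 2"
  hence "(2::nat) ^ k \<le> p ^ k" by (simp add: power_mono)
  moreover have "k < 2 ^ k" by simp
  ultimately show ?thesis by linarith
qed

lemma small_terms:
  fixes av :: "'a::field \<Rightarrow> real" and lam :: "nat \<Rightarrow> 'a"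
  assumes na: "nonarch_abs av" and p2: "p \<ge> (2::nat)" and e: "e > 0"
    and lt: "\<And>i. i < N \<Longrightarrow> av (lam i) < 1"
  shows "\<exists>M. \<forall>i<N. \<forall>m. m \<ge> i + M \<longrightarrow> av (lam i) ^ (p ^ (m - i)) < e"
proof -
  define c where "c = Max (insert 0 ((\<lambda>i. av (lam i)) ` {..<N}))"
  have c0: "c \<ge> 0" unfolding c_def by simp
  have c1: "c < 1" unfolding c_def using lt by (auto simp: Max_less_iff)
  have ci: "\<And>i. i < N \<Longrightarrow> av (lam i) \<le> c" unfolding c_def by (auto intro: Max_ge)
  obtain M where M: "c ^ M < e" using real_arch_pow_inv[OF e c1] by blast
  show ?thesis
  proof (intro exI allI impI)
    fix i m assume i: "i < N" and m: "m \<ge> i + M"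
    have "av (lam i) ^ (p ^ (m - i)) \<le> c ^ (p ^ (m - i))"
      using ci[OF i] na_basic(7)[OF na] by (simp add: power_mono)
    also have "\<dots> \<le> c ^ M"
    proof (rule power_decreasing[OF _ c0])
      have "M \<le> m - i" using m by simp
      also have "\<dots> \<le> p ^ (m - i)" using pow_ge[OF p2] .
      finally show "M \<le> p ^ (m - i)" .
    qed (use c1 in simp)
    finally show "av (lam i) ^ (p ^ (m - i)) < e" using M by simp
  qed
qed

theorem lemma2p2p4:
  fixes av :: "'a::field_char_0 \<Rightarrow> real" and p :: nat and lam :: "nat \<Rightarrow> 'a"
  assumes "nonarch_abs av" and "abs_complete av" and "residue_char av p"
    and "witt_OK av lam"
  shows "((\<lambda>j. av (phantom p lam j)) \<longlonglongrightarrow> 0) \<longleftrightarrow> (\<forall>j. av (lam j) < 1)"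
proof -
  note na = assms(1)
  note B = na_basic[OF na]
  define q where "q = av (of_nat p :: 'a)"
  have pp: "prime p" and q1: "q < 1" using assms(3) unfolding residue_char_def q_def by auto
  have p2: "p \<ge> 2" using pp by (simp add: prime_ge_2_nat)
  have "(of_nat p :: 'a) \<noteq> 0" using p2 by simp
  hence q0: "q > 0" unfolding q_def using na unfolding nonarch_abs_def
    by (metis less_eq_real_def)
  have le1: "\<And>j. av (lam j) \<le> 1" using assms(4) unfolding witt_OK_def by auto
  have trm: "\<And>i k. av (of_nat p ^ i * lam i ^ k) = q ^ i * av (lam i) ^ k"
    using B by (simp add: q_def)
  have termle: "\<And>i k. av (of_nat p ^ i * lam i ^ k) \<le> q ^ i"
  proof -
    fix i k
    have "av (lam i) ^ k \<le> 1" using le1 B(7) by (simp add: power_le_one)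
    hence "q ^ i * av (lam i) ^ k \<le> q ^ i * 1" using q0
      by (intro mult_left_mono) auto
    thus "av (of_nat p ^ i * lam i ^ k) \<le> q ^ i" using trm by simp
  qed
  have termle2: "\<And>i k. av (of_nat p ^ i * lam i ^ k) \<le> av (lam i) ^ k"
  proof -
    fix i k
    have "q ^ i \<le> 1" using q0 q1 by (simp add: power_le_one)
    hence "q ^ i * av (lam i) ^ k \<le> 1 * av (lam i) ^ k" using B(7)
      by (intro mult_right_mono) auto
    thus "av (of_nat p ^ i * lam i ^ k) \<le> av (lam i) ^ k" using trm by simp
  qed
  show ?thesis
  proof
    assume lim: "(\<lambda>j. av (phantom p lam j)) \<longlonglongrightarrow> 0"
    show "\<forall>j. av (lam j) < 1"
    proof (rule ccontr)
      assume "\<not> (\<forall>j. av (lam j) < 1)"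
      then obtain j0 where "\<not> av (lam j0) < 1" by blast
      define j where "j = (LEAST j. \<not> av (lam j) < 1)"
      have jn: "\<not> av (lam j) < 1" unfolding j_def by (rule LeastI) fact
      hence aj: "av (lam j) = 1" using le1[of j] by simp
      have lt: "\<And>i. i < j \<Longrightarrow> av (lam i) < 1" unfolding j_def using not_less_Least by blast
      define t where "t = q ^ j"
      have t0: "t > 0" unfolding t_def using q0 by simp
      obtain M where M: "\<forall>i<j. \<forall>m. m \<ge> i + M \<longrightarrow> av (lam i) ^ (p ^ (m - i)) < t"
        using small_terms[OF na p2 t0, of j lam] lt by blast
      have eq: "av (phantom p lam m) = t" if m: "m \<ge> j + M" for m
      proof -
        let ?f = "\<lambda>i. of_nat p ^ i * lam i ^ (p ^ (m - i)) :: 'a"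
        have jm: "j \<in> {..m}" using m by simp
        have ph: "phantom p lam m = ?f j + sum ?f ({..m} - {j})"
          unfolding phantom_def using sum.remove[OF _ jm] by simp
        have rest: "av (sum ?f ({..m} - {j})) < t"
        proof (rule na_sum_less[OF na _ t0])
          fix i assume i: "i \<in> {..m} - {j}"
          show "av (?f i) < t"
          proof (cases "i < j")
            case True
            have "av (?f i) \<le> av (lam i) ^ (p ^ (m - i))" by (rule termle2)
            also have "\<dots> < t" using M True m by auto
            finally show ?thesis .
          next
            case False
            hence "j < i" using i by auto
            have "av (?f i) \<le> q ^ i" by (rule termle)
            also have "\<dots> < t" unfolding t_def
              using power_strict_decreasing[OF \<open>j < i\<close> q0 q1] .
            finally show ?thesis .
          qed
        qed simp
        have fj: "av (?f j) = t" using trm aj by (simp add: t_def)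
        show ?thesis using na_strict[OF na, of "sum ?f ({..m} - {j})" "?f j"] rest fj ph by simp
      qed
      from lim t0 obtain n0 where "\<forall>n\<ge>n0. dist (av (phantom p lam n)) 0 < t"
        unfolding lim_sequentially by blast
      hence "dist (av (phantom p lam (n0 + j + M))) 0 < t" by simp
      thus False using eq[of "n0 + j + M"] by simp
    qed
  next
    assume all: "\<forall>j. av (lam j) < 1"
    show "(\<lambda>j. av (phantom p lam j)) \<longlonglongrightarrow> 0"
      unfolding lim_sequentially
    proof (intro allI impI)
      fix e :: real assume e: "e > 0"
      obtain N where N: "q ^ N < e" using real_arch_pow_inv[OF e q1] by blast
      obtain M where M: "\<forall>i<N. \<forall>m. m \<ge> i + M \<longrightarrow> av (lam i) ^ (p ^ (m - i)) < e"
        using small_terms[OF na p2 e, of N lam] all by blast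
      show "\<exists>no. \<forall>n\<ge>no. dist (av (phantom p lam n)) 0 < e"
      proof (intro exI allI impI)
        fix m assume m: "m \<ge> N + M"
        have "av (phantom p lam m) < e"
          unfolding phantom_def
        proof (rule na_sum_less[OF na _ e])
          fix i assume i: "i \<in> {..m}"
          show "av (of_nat p ^ i * lam i ^ (p ^ (m - i))) < e"
          proof (cases "i < N")
            case True
            have "av (of_nat p ^ i * lam i ^ (p ^ (m - i))) \<le> av (lam i) ^ (p ^ (m - i))"
              by (rule termle2)
            also have "\<dots> < e" using M True m by auto
            finally show ?thesis .
          next
            case False
            have "av (of_nat p ^ i * lam i ^ (p ^ (m - i))) \<le> q ^ i" by (rule termle)
            also have "\<dots> \<le> q ^ N" using False q0 q1 by (intro power_decreasing) auto
            finally show ?thesis using N by simp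
          qed
        qed simp
        thus "dist (av (phantom p lam m)) 0 < e" using B(7) by simp
      qed
    qed
  qed
qed

end
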